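(* Let $\overline{\mathrm{PRCN}}\subseteq\mathbb{R}$ be the set of real numbers of the form $I+\sum_{i=1}^\infty P(i)2^{-i}$ with $I\in\mathbb{Z}$ and $P:\mathbb{Z}^+\to\{0,1\}$ primitive recursive, and let $\overline{\mathrm{SPRCN}}\subseteq\mathbb{R}$ be the set of real numbers of the form $I+\sum_{i=1}^\infty P(i)2^{-i}$ with $I\in\mathbb{Z}$ and $P:\mathbb{Z}^+\to\{-1,0,1\}$ primitive recursive. Then $\overline{\mathrm{PRCN}}\subsetneq\overline{\mathrm{SPRCN}}$; that is, there is a real number which is the value of some signed primitive recursive binary series with digits in $\{-1,0,1\}$ but which has no binary expansion (with digits in $\{0,1\}$, after an integer part) given by a primitive recursive digit function.
   Context: A function $\mathbb{Z}^+\to\{0,1\}$ or $\mathbb{Z}^+\to\{-1,0,1\}$ is primitive recursive if it is obtained from a primitive recursive $P':\mathbb{N}\to\mathbb{N}$ via a primitive recursive encoding of the finitely many values. *)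

theory Defs
  imports Complex_Main
begin

fun prec_fun :: "(nat list \<Rightarrow> nat) \<Rightarrow> (nat list \<Rightarrow> nat) \<Rightarrow> nat \<Rightarrow> nat list \<Rightarrow> nat" where
  "prec_fun g h 0 ys = g ys"
| "prec_fun g h (Suc k) ys = h (k # prec_fun g h k ys # ys)"

text \<open>PR n f: f is an n-ary primitive recursive function (arguments as a list
  of length n).\<close>

inductive PR :: "nat \<Rightarrow> (nat list \<Rightarrow> nat) \<Rightarrow> bool" where
  zero: "PR n (\<lambda>_. 0)"
| succ: "PR 1 (\<lambda>xs. Suc (hd xs))"
| proj: "i < n \<Longrightarrow> PR n (\<lambda>xs. xs ! i)"
| comp: "PR m f \<Longrightarrow> length gs = m \<Longrightarrow> (\<forall>g\<in>set gs. PR n g)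
          \<Longrightarrow> PR n (\<lambda>xs. f (map (\<lambda>g. g xs) gs))"
| prec: "PR n g \<Longrightarrow> PR (Suc (Suc n)) h
          \<Longrightarrow> PR (Suc n) (\<lambda>xs. prec_fun g h (hd xs) (tl xs))"

definition prim_rec1 :: "(nat \<Rightarrow> nat) \<Rightarrow> bool" where
  "prim_rec1 P \<longleftrightarrow> (\<exists>f. PR 1 f \<and> (\<forall>x. P x = f [x]))"

text \<open>A digit function Z+ -> {-1,0,1} is given by a unary primitive recursive
  P' : nat -> nat with values in {0,1,2}; digit i is P' i - 1.\<close>

definition PRCN :: "real set" where
  "PRCN = {x. \<exists>(I::int) P. prim_rec1 P \<and> (\<forall>i. P i \<le> 1) \<and>
              x = of_int I + (\<Sum>i. real (P (Suc i)) / 2 ^ Suc i)}"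

definition SPRCN :: "real set" where
  "SPRCN = {x. \<exists>(I::int) P. prim_rec1 P \<and> (\<forall>i. P i \<le> 2) \<and>
              x = of_int I + (\<Sum>i. (real (P (Suc i)) - 1) / 2 ^ Suc i)}"

end

theory Submission
  imports Defs "HOL-Library.Nat_Bijection"
begin

definition var :: "nat \<Rightarrow> nat list \<Rightarrow> nat" where
  "var k xs = (if k < length xs then xs ! k else 0)"

lemma var_tl[simp]: "var k (tl xs) = var (Suc k) xs"
  by (cases xs) (auto simp: var_def)
lemma var_Cons0[simp]: "var 0 (x # xs) = x" by (simp add: var_def)
lemma var_ConsS[simp]: "var (Suc k) (x # xs) = var k xs" by (simp add: var_def)

definition PRe :: "nat \<Rightarrow> (nat list \<Rightarrow> nat) \<Rightarrow> bool" where
  "PRe n F \<longleftrightarrow> (\<exists>f. PR n f \<and> (\<forall>xs. length xs = n \<longrightarrow> f xs = F xs))"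

lemma PRe_cong: "PRe n F \<Longrightarrow> (\<And>xs. length xs = n \<Longrightarrow> F xs = G xs) \<Longrightarrow> PRe n G"
  unfolding PRe_def by metis

lemma PRe_var[intro]: "k < n \<Longrightarrow> PRe n (\<lambda>xs. var k xs)"
  unfolding PRe_def by (rule exI[of _ "\<lambda>xs. xs ! k"]) (auto intro: PR.proj simp: var_def)

lemma ex_gs: "(\<forall>F\<in>set Fs. PRe n F) \<Longrightarrow> \<exists>gs. length gs = length Fs \<and> (\<forall>g\<in>set gs. PR n g) \<and>
   (\<forall>xs. length xs = n \<longrightarrow> map (\<lambda>g. g xs) gs = map (\<lambda>F. F xs) Fs)"
proof (induction Fs)
  case Nil then show ?case by auto
next
  case (Cons F Fs)
  then obtain gs where gs: "length gs = length Fs" "\<forall>g\<in>set gs. PR n g"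
    "\<forall>xs. length xs = n \<longrightarrow> map (\<lambda>g. g xs) gs = map (\<lambda>F. F xs) Fs" by auto
  from Cons.prems obtain f where "PR n f" "\<forall>xs. length xs = n \<longrightarrow> f xs = F xs"
    unfolding PRe_def by auto
  then show ?case using gs by (intro exI[of _ "f # gs"]) auto
qed

lemma PRe_comp: "PRe m G \<Longrightarrow> length Fs = m \<Longrightarrow> (\<forall>F\<in>set Fs. PRe n F) \<Longrightarrow>
   PRe n (\<lambda>xs. G (map (\<lambda>F. F xs) Fs))"
proof -
  assume G: "PRe m G" and l: "length Fs = m" and F: "\<forall>F\<in>set Fs. PRe n F"
  from G obtain g where g: "PR m g" "\<forall>xs. length xs = m \<longrightarrow> g xs = G xs" unfolding PRe_def by auto
  from ex_gs[OF F] obtain gs where gs: "length gs = length Fs" "\<forall>g\<in>set gs. PR n g"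
    "\<forall>xs. length xs = n \<longrightarrow> map (\<lambda>g. g xs) gs = map (\<lambda>F. F xs) Fs" by auto
  have "PR n (\<lambda>xs. g (map (\<lambda>g. g xs) gs))" using g(1) gs l by (intro PR.comp) auto
  then show ?thesis unfolding PRe_def using g gs l by (intro exI[of _ "\<lambda>xs. g (map (\<lambda>g. g xs) gs)"]) auto
qed

lemma PRe_prec0: "PRe n G \<Longrightarrow> PRe (Suc (Suc n)) H \<Longrightarrow> PRe (Suc n) (\<lambda>xs. prec_fun G H (hd xs) (tl xs))"
proof -
  assume G: "PRe n G" and H: "PRe (Suc (Suc n)) H"
  from G obtain g where g: "PR n g" "\<forall>xs. length xs = n \<longrightarrow> g xs = G xs" unfolding PRe_def by auto
  from H obtain h where h: "PR (Suc (Suc n)) h" "\<forall>xs. length xs = Suc (Suc n) \<longrightarrow> h xs = H xs" unfolding PRe_def by auto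
  have eq: "prec_fun g h k ys = prec_fun G H k ys" if "length ys = n" for k ys
    using that g h by (induction k) auto
  show ?thesis unfolding PRe_def
    by (rule exI[of _ "\<lambda>xs. prec_fun g h (hd xs) (tl xs)"]) (auto intro: PR.prec g h simp: eq)
qed

fun natrec :: "(nat list \<Rightarrow> nat) \<Rightarrow> (nat \<Rightarrow> nat \<Rightarrow> nat list \<Rightarrow> nat) \<Rightarrow> nat \<Rightarrow> nat list \<Rightarrow> nat" where
  "natrec G H 0 xs = G xs"
| "natrec G H (Suc k) xs = H k (natrec G H k xs) xs"

lemma map_var_upt: "length xs = n + k \<Longrightarrow> map (\<lambda>i. var i xs) [k..<n+k] = drop k xs"
  by (rule nth_equalityI) (auto simp: var_def)

lemma PRe_reindex: "PRe m G \<Longrightarrow> length is = m \<Longrightarrow> (\<forall>i\<in>set is. i < n) \<Longrightarrow>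
   PRe n (\<lambda>xs. G (map (\<lambda>i. var i xs) is))"
  using PRe_comp[of m G "map (\<lambda>i xs. var i xs) is" n] by (auto simp: comp_def)

lemma PRe_subst: "PRe (Suc n) F \<Longrightarrow> PRe n K \<Longrightarrow> PRe n (\<lambda>xs. F (K xs # xs))"
proof -
  assume F: "PRe (Suc n) F" and K: "PRe n K"
  have "PRe n (\<lambda>xs. F (map (\<lambda>F. F xs) (K # map (\<lambda>i xs. var i xs) [0..<n])))"
    by (rule PRe_comp[OF F]) (use K in auto)
  then show ?thesis
    by (rule PRe_cong) (simp add: comp_def map_var_upt[where k=0, simplified])
qed

lemma PRe_weak: "PRe n F \<Longrightarrow> PRe (Suc n) (\<lambda>ys. F (tl ys))"
proof -
  assume F: "PRe n F"
  have "PRe (Suc n) (\<lambda>xs. F (map (\<lambda>i. var i xs) [1..<n+1]))"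
    by (rule PRe_reindex[OF F]) auto
  then show ?thesis
    by (rule PRe_cong) (simp add: map_var_upt[where k=1, simplified] drop_Suc)
qed

lemma PRe_succ1: "PRe 1 (\<lambda>xs. Suc (var 0 xs))"
  unfolding PRe_def
  using PR.succ by (intro exI[of _ "\<lambda>xs. Suc (hd xs)"]) (auto simp: var_def length_Suc_conv)

lemma PRe_comp1: "PRe 1 G \<Longrightarrow> PRe n A \<Longrightarrow> PRe n (\<lambda>xs. G [A xs])"
  using PRe_comp[of 1 G "[A]" n] by auto

lemma PRe_comp2: "PRe 2 G \<Longrightarrow> PRe n A \<Longrightarrow> PRe n B \<Longrightarrow> PRe n (\<lambda>xs. G [A xs, B xs])"
  using PRe_comp[of 2 G "[A,B]" n] by auto

lemma PRe_Suc[intro]: "PRe n A \<Longrightarrow> PRe n (\<lambda>xs. Suc (A xs))"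
  using PRe_comp1[OF PRe_succ1] by simp

lemma PRe_const[intro]: "PRe n (\<lambda>_. c)"
proof (induction c)
  case 0 then show ?case unfolding PRe_def by (auto intro: PR.zero)
next
  case (Suc c) then show ?case using PRe_Suc by blast
qed

lemma PRe_rec: "PRe n G \<Longrightarrow> PRe (Suc (Suc n)) (\<lambda>ys. H (var 0 ys) (var (Suc 0) ys) (tl (tl ys))) \<Longrightarrow> PRe n K \<Longrightarrow>
  PRe n (\<lambda>xs. natrec G H (K xs) xs)"
proof -
  assume G: "PRe n G" and H: "PRe (Suc (Suc n)) (\<lambda>ys. H (var 0 ys) (var (Suc 0) ys) (tl (tl ys)))" and K: "PRe n K"
  have eq: "prec_fun G (\<lambda>ys. H (var 0 ys) (var (Suc 0) ys) (tl (tl ys))) k ys = natrec G H k ys" for k ys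
    by (induction k) auto
  have "PRe (Suc n) (\<lambda>xs. prec_fun G (\<lambda>ys. H (var 0 ys) (var (Suc 0) ys) (tl (tl ys))) (hd xs) (tl xs))"
    by (rule PRe_prec0[OF G H])
  then have "PRe (Suc n) (\<lambda>xs. natrec G H (hd xs) (tl xs))" by (rule PRe_cong) (rule eq)
  from PRe_subst[OF this K] show ?thesis by simp
qed

lemma PRe_add[intro]: "PRe n A \<Longrightarrow> PRe n B \<Longrightarrow> PRe n (\<lambda>xs. A xs + B xs)"
proof -
  assume A: "PRe n A" and B: "PRe n B"
  have "PRe n (\<lambda>xs. natrec B (\<lambda>k r xs. Suc r) (A xs) xs)"
    by (rule PRe_rec[OF B _ A]) auto
  moreover have "natrec B (\<lambda>k r xs. Suc r) a xs = a + B xs" for a xs by (induction a) auto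
  ultimately show ?thesis by simp
qed

lemma PRe_mult[intro]: "PRe n A \<Longrightarrow> PRe n B \<Longrightarrow> PRe n (\<lambda>xs. A xs * B xs)"
proof -
  assume A: "PRe n A" and B: "PRe n B"
  have "PRe n (\<lambda>xs. natrec (\<lambda>_. 0) (\<lambda>k r xs. r + B xs) (A xs) xs)"
    by (rule PRe_rec[OF _ _ A]) (auto intro!: PRe_weak B)
  moreover have "natrec (\<lambda>_. 0) (\<lambda>k r xs. r + B xs) a xs = a * B xs" for a xs by (induction a) auto
  ultimately show ?thesis by simp
qed

lemma PRe_pred[intro]: "PRe n A \<Longrightarrow> PRe n (\<lambda>xs. A xs - 1)"
proof -
  assume A: "PRe n A"
  have "PRe n (\<lambda>xs. natrec (\<lambda>_. 0) (\<lambda>k r xs. k) (A xs) xs)"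
    by (rule PRe_rec[OF _ _ A]) auto
  moreover have "natrec (\<lambda>_. 0) (\<lambda>k r xs. k) a xs = a - 1" for a xs by (induction a) auto
  ultimately show ?thesis by simp
qed

lemma PRe_sub[intro]: "PRe n A \<Longrightarrow> PRe n B \<Longrightarrow> PRe n (\<lambda>xs. A xs - B xs)"
proof -
  assume A: "PRe n A" and B: "PRe n B"
  have "PRe n (\<lambda>xs. natrec A (\<lambda>k r xs. r - 1) (B xs) xs)"
    by (rule PRe_rec[OF A _ B]) (intro PRe_pred PRe_var; simp)
  moreover have "natrec A (\<lambda>k r xs. r - 1) b xs = A xs - b" for b xs by (induction b) auto
  ultimately show ?thesis by simp
qed

definition PRp :: "nat \<Rightarrow> (nat list \<Rightarrow> bool) \<Rightarrow> bool" where
  "PRp n P \<longleftrightarrow> PRe n (\<lambda>xs. if P xs then 1 else 0)"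

lemma PRp_cong: "PRp n P \<Longrightarrow> (\<And>xs. length xs = n \<Longrightarrow> P xs = Q xs) \<Longrightarrow> PRp n Q"
  unfolding PRp_def by (erule PRe_cong) simp

lemma PRe_if[intro]: "PRp n P \<Longrightarrow> PRe n A \<Longrightarrow> PRe n B \<Longrightarrow> PRe n (\<lambda>xs. if P xs then A xs else B xs)"
proof -
  assume P: "PRp n P" and A: "PRe n A" and B: "PRe n B"
  have "PRe n (\<lambda>xs. (if P xs then 1 else 0) * A xs + (1 - (if P xs then 1 else 0)) * B xs)"
    using P A B unfolding PRp_def by (intro PRe_add PRe_mult PRe_sub PRe_const)
  then show ?thesis by (rule PRe_cong) auto
qed

lemma PRp_eq[intro]: "PRe n A \<Longrightarrow> PRe n B \<Longrightarrow> PRp n (\<lambda>xs. A xs = B xs)"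
proof -
  assume A: "PRe n A" and B: "PRe n B"
  have "PRe n (\<lambda>xs. 1 - ((A xs - B xs) + (B xs - A xs)))"
    using A B by (intro PRe_add PRe_sub PRe_const)
  then show ?thesis unfolding PRp_def by (rule PRe_cong) auto
qed

lemma PRp_less[intro]: "PRe n A \<Longrightarrow> PRe n B \<Longrightarrow> PRp n (\<lambda>xs. A xs < B xs)"
proof -
  assume A: "PRe n A" and B: "PRe n B"
  have "PRe n (\<lambda>xs. 1 - (1 - (B xs - A xs)))"
    using A B by (intro PRe_add PRe_sub PRe_const)
  then show ?thesis unfolding PRp_def by (rule PRe_cong) auto
qed

lemma PRp_le[intro]: "PRe n A \<Longrightarrow> PRe n B \<Longrightarrow> PRp n (\<lambda>xs. A xs \<le> B xs)"
proof -
  assume A: "PRe n A" and B: "PRe n B"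
  have "PRp n (\<lambda>xs. A xs < Suc (B xs))" using A B by auto
  then show ?thesis by (rule PRp_cong) auto
qed

lemma PRp_not[intro]: "PRp n P \<Longrightarrow> PRp n (\<lambda>xs. \<not> P xs)"
proof -
  assume P: "PRp n P"
  have "PRe n (\<lambda>xs. 1 - (if P xs then 1 else 0))" using P unfolding PRp_def by auto
  then show ?thesis unfolding PRp_def by (rule PRe_cong) auto
qed

lemma PRp_conj[intro]: "PRp n P \<Longrightarrow> PRp n Q \<Longrightarrow> PRp n (\<lambda>xs. P xs \<and> Q xs)"
proof -
  assume P: "PRp n P" and Q: "PRp n Q"
  have "PRe n (\<lambda>xs. (if P xs then 1 else 0) * (if Q xs then 1 else 0))" using P Q unfolding PRp_def by auto
  then show ?thesis unfolding PRp_def by (rule PRe_cong) auto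
qed

lemma PRp_disj[intro]: "PRp n P \<Longrightarrow> PRp n Q \<Longrightarrow> PRp n (\<lambda>xs. P xs \<or> Q xs)"
proof -
  assume P: "PRp n P" and Q: "PRp n Q"
  have "PRp n (\<lambda>xs. \<not> (\<not> P xs \<and> \<not> Q xs))" using P Q by (intro PRp_not PRp_conj)
  then show ?thesis by (rule PRp_cong) auto
qed

lemma PRp_imp[intro]: "PRp n P \<Longrightarrow> PRp n Q \<Longrightarrow> PRp n (\<lambda>xs. P xs \<longrightarrow> Q xs)"
proof -
  assume P: "PRp n P" and Q: "PRp n Q"
  have "PRp n (\<lambda>xs. \<not> P xs \<or> Q xs)" using P Q by (intro PRp_not PRp_disj)
  then show ?thesis by (rule PRp_cong) auto
qed

lemma PRp_const[intro]: "PRp n (\<lambda>_. b)"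
  unfolding PRp_def by auto

lemma PRe_drop1: "PRe (Suc n) F \<Longrightarrow> PRe (Suc (Suc n)) (\<lambda>zs. F (var 0 zs # tl (tl zs)))"
proof -
  assume F: "PRe (Suc n) F"
  have "PRe (Suc (Suc n)) (\<lambda>xs. F (map (\<lambda>i. var i xs) (0 # [2..<n+2])))"
    by (rule PRe_reindex[OF F]) auto
  then show ?thesis
  proof (rule PRe_cong)
    fix xs :: "nat list" assume l: "length xs = Suc (Suc n)"
    have m: "map (\<lambda>i. var i xs) [2..<n+2] = drop 2 xs" using map_var_upt[of xs n 2] l by simp
    show "F (map (\<lambda>i. var i xs) (0 # [2..<n+2])) = F (var 0 xs # tl (tl xs))"
      by (simp only: list.map(2) m) (simp add: numeral_2_eq_2 drop_Suc)
  qed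
qed

lemma PRe_sum[intro]: "PRe (Suc n) (\<lambda>ys. F (var 0 ys) (tl ys)) \<Longrightarrow> PRe n B \<Longrightarrow>
   PRe n (\<lambda>xs. \<Sum>i<B xs. F i xs)"
proof -
  assume F: "PRe (Suc n) (\<lambda>ys. F (var 0 ys) (tl ys))" and B: "PRe n B"
  have F2: "PRe (Suc (Suc n)) (\<lambda>zs. F (var 0 zs) (tl (tl zs)))"
    using PRe_drop1[OF F] by simp
  have "PRe n (\<lambda>xs. natrec (\<lambda>_. 0) (\<lambda>k r xs. r + F k xs) (B xs) xs)"
    by (rule PRe_rec[OF _ _ B]) (use F2 in auto)
  moreover have "natrec (\<lambda>_. 0) (\<lambda>k r xs. r + F k xs) b xs = (\<Sum>i<b. F i xs)" for b xs
    by (induction b) auto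
  ultimately show ?thesis by simp
qed

lemma sum_ind_pos: "(0 < (\<Sum>i<(b::nat). if P i then 1 else 0::nat)) = (\<exists>i<b. P i)"
  by (induction b arbitrary: P) (auto simp: less_Suc_eq)

lemma PRp_ex[intro]: "PRp (Suc n) (\<lambda>ys. P (var 0 ys) (tl ys)) \<Longrightarrow> PRe n B \<Longrightarrow>
   PRp n (\<lambda>xs. \<exists>i<B xs. P i xs)"
proof -
  assume P: "PRp (Suc n) (\<lambda>ys. P (var 0 ys) (tl ys))" and B: "PRe n B"
  have "PRe n (\<lambda>xs. \<Sum>i<B xs. if P i xs then 1 else 0)"
    using P B unfolding PRp_def by (intro PRe_sum) auto
  then have "PRp n (\<lambda>xs. 0 < (\<Sum>i<B xs. if P i xs then 1 else 0::nat))" by auto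
  then show ?thesis
  proof (rule PRp_cong)
    fix xs
    show "(0 < (\<Sum>i<B xs. if P i xs then 1 else 0::nat)) = (\<exists>i<B xs. P i xs)"
      by (rule sum_ind_pos)
  qed
qed

lemma PRp_all[intro]: "PRp (Suc n) (\<lambda>ys. P (var 0 ys) (tl ys)) \<Longrightarrow> PRe n B \<Longrightarrow>
   PRp n (\<lambda>xs. \<forall>i<B xs. P i xs)"
proof -
  assume P: "PRp (Suc n) (\<lambda>ys. P (var 0 ys) (tl ys))" and B: "PRe n B"
  have "PRp n (\<lambda>xs. \<not> (\<exists>i<B xs. \<not> P i xs))" using P B by (intro PRp_not PRp_ex) auto
  then show ?thesis by (rule PRp_cong) auto
qed

lemma PRe_var0[intro]: "PRe (Suc n) (\<lambda>xs. var 0 xs)" by (rule PRe_var) simp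
lemma PRe_varS[intro]: "PRe n (\<lambda>xs. var k xs) \<Longrightarrow> PRe (Suc n) (\<lambda>xs. var (Suc k) xs)"
  using PRe_weak[of n "var k"] by simp

lemmas pr_intros = PRe_var0 PRe_varS PRe_const PRe_Suc PRe_add PRe_mult PRe_sub PRe_pred PRe_if
  PRp_eq PRp_less PRp_le PRp_not PRp_conj PRp_disj PRp_imp PRp_const PRe_sum PRp_ex PRp_all

lemma sum_select: "(a0::nat) < B \<Longrightarrow> P a0 \<Longrightarrow> (\<forall>a. P a \<longrightarrow> a = a0) \<Longrightarrow> (\<Sum>a<B. if P a then a else 0) = a0"
proof -
  assume h: "a0 < B" "P a0" "\<forall>a. P a \<longrightarrow> a = a0"
  have "(\<Sum>a<B. if P a then a else 0) = (\<Sum>a<B. if a = a0 then a else 0)"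
    by (rule sum.cong[OF refl]) (metis h(2,3))
  also have "\<dots> = a0" using h(1) by simp
  finally show ?thesis .
qed

lemma PRe_pow2[intro]: "PRe n A \<Longrightarrow> PRe n (\<lambda>xs. 2 ^ A xs)"
proof -
  assume A: "PRe n A"
  have "PRe n (\<lambda>xs. natrec (\<lambda>_. 1) (\<lambda>k r xs. r + r) (A xs) xs)"
    by (rule PRe_rec[OF _ _ A]) (intro pr_intros)+
  moreover have "natrec (\<lambda>_. 1) (\<lambda>k r xs. r + r) a xs = 2 ^ a" for a xs by (induction a) auto
  ultimately show ?thesis by simp
qed


lemma PRe_triangle[intro]: "PRe n A \<Longrightarrow> PRe n (\<lambda>xs. triangle (A xs))"
proof -
  assume A: "PRe n A"
  have "PRe n (\<lambda>xs. natrec (\<lambda>_. 0) (\<lambda>k r xs. r + Suc k) (A xs) xs)"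
    by (rule PRe_rec[OF _ _ A]) (intro pr_intros)+
  moreover have "natrec (\<lambda>_. 0) (\<lambda>k r xs. r + Suc k) a xs = triangle a" for a xs by (induction a) auto
  ultimately show ?thesis by simp
qed

lemma PRe_pe[intro]: "PRe n A \<Longrightarrow> PRe n B \<Longrightarrow> PRe n (\<lambda>xs. prod_encode (A xs, B xs))"
proof -
  assume A: "PRe n A" and B: "PRe n B"
  have "PRe n (\<lambda>xs. triangle (A xs + B xs) + A xs)" using A B by (intro pr_intros PRe_triangle)
  then show ?thesis by (simp add: prod_encode_def)
qed

definition pfst :: "nat \<Rightarrow> nat" where "pfst p = fst (prod_decode p)"
definition psnd :: "nat \<Rightarrow> nat" where "psnd p = snd (prod_decode p)"

lemma pfst_pe[simp]: "pfst (prod_encode (a, b)) = a" by (simp add: pfst_def)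
lemma psnd_pe[simp]: "psnd (prod_encode (a, b)) = b" by (simp add: psnd_def)
lemma pe_eq: "prod_encode (a, b) = p \<longleftrightarrow> a = pfst p \<and> b = psnd p"
  by (metis pfst_pe prod_decode_inverse prod.collapse psnd_pe pfst_def psnd_def)
lemma pfst_le: "pfst p \<le> p" by (metis le_prod_encode_1 pe_eq)
lemma psnd_le: "psnd p \<le> p" by (metis le_prod_encode_2 pe_eq)

lemma pfst_sum: "pfst p = (\<Sum>a<p + 1. if (\<exists>b<p + 1. prod_encode (a, b) = p) then a else 0)"
  by (rule sym, rule sum_select) (auto simp: pe_eq le_imp_less_Suc pfst_le psnd_le)

lemma psnd_sum: "psnd p = (\<Sum>b<p + 1. if (\<exists>a<p + 1. prod_encode (a, b) = p) then b else 0)"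
  by (rule sym, rule sum_select) (auto simp: pe_eq le_imp_less_Suc pfst_le psnd_le)

lemma PRe_pfst[intro]: "PRe n A \<Longrightarrow> PRe n (\<lambda>xs. pfst (A xs))"
proof -
  assume A: "PRe n A"
  have "PRe n (\<lambda>xs. \<Sum>a<A xs + 1. if (\<exists>b<A xs + 1. prod_encode (a, b) = A xs) then a else 0)"
    by (intro pr_intros PRe_pe PRe_weak A | simp only: var_tl)+
  then show ?thesis by (rule PRe_cong) (rule pfst_sum[symmetric])
qed

lemma PRe_psnd[intro]: "PRe n A \<Longrightarrow> PRe n (\<lambda>xs. psnd (A xs))"
proof -
  assume A: "PRe n A"
  have "PRe n (\<lambda>xs. \<Sum>b<A xs + 1. if (\<exists>a<A xs + 1. prod_encode (a, b) = A xs) then b else 0)"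
    by (intro pr_intros PRe_pe PRe_weak A | simp only: var_tl)+
  then show ?thesis by (rule PRe_cong) (rule psnd_sum[symmetric])
qed

lemma mod5_sum: "(c::nat) mod 5 = (\<Sum>r<5. if (r < 5 \<and> (\<exists>q<c + 1. c = 5 * q + r)) then r else 0)"
  by (rule sym, rule sum_select) (auto intro!: exI[of _ "c div 5"])

lemma div5_sum: "(c::nat) div 5 = (\<Sum>q<c+1. if (\<exists>r<5. c = 5 * q + r) then q else 0)"
  by (rule sym, rule sum_select) (auto intro!: exI[of _ "c mod 5"])

lemma PRe_mod5[intro]: "PRe n A \<Longrightarrow> PRe n (\<lambda>xs. A xs mod 5)"
proof -
  assume A: "PRe n A"
  have "PRe n (\<lambda>xs. \<Sum>r<5. if (r < 5 \<and> (\<exists>q<A xs + 1. A xs = 5 * q + r)) then r else 0)"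
    by (intro pr_intros PRe_weak A | simp only: var_tl)+
  then show ?thesis by (rule PRe_cong) (rule mod5_sum[symmetric])
qed

lemma PRe_div5[intro]: "PRe n A \<Longrightarrow> PRe n (\<lambda>xs. A xs div 5)"
proof -
  assume A: "PRe n A"
  have "PRe n (\<lambda>xs. \<Sum>q<A xs + 1. if (\<exists>r<5. A xs = 5 * q + r) then q else 0)"
    by (intro pr_intros PRe_weak A | simp only: var_tl)+
  then show ?thesis by (rule PRe_cong) (rule div5_sum[symmetric])
qed

lemma odd_div_pow2: "odd ((S::nat) div 2 ^ e) \<longleftrightarrow> (\<exists>q<S + 1. \<exists>r<2 ^ e. S = (2 * q + 1) * 2 ^ e + r)"
proof
  assume o: "odd (S div 2 ^ e)"
  define q where "q = S div 2 ^ e div 2"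
  have "S div 2 ^ e = 2 * q + 1" using o odd_two_times_div_two_succ unfolding q_def by metis
  moreover have "S = S div 2 ^ e * 2 ^ e + S mod 2 ^ e" by (rule div_mult_mod_eq[symmetric])
  ultimately have "S = (2 * q + 1) * 2 ^ e + S mod 2 ^ e" by metis
  moreover have "q < S + 1" unfolding q_def
    using div_le_dividend[of "S div 2^e" 2] div_le_dividend[of S "2^e"] by linarith
  ultimately show "\<exists>q<S + 1. \<exists>r<2 ^ e. S = (2 * q + 1) * 2 ^ e + r"
    by (intro exI[of _ q] conjI exI[of _ "S mod 2 ^ e"]) auto
next
  assume "\<exists>q<S + 1. \<exists>r<2 ^ e. S = (2 * q + 1) * 2 ^ e + r"
  then obtain q r where r: "r < 2 ^ e" and S: "S = (2 * q + 1) * 2 ^ e + r" by auto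
  have "S div 2 ^ e = 2 * q + 1" unfolding S using r
    by (subst add.commute, subst div_mult_self1) auto
  then show "odd (S div 2 ^ e)" by simp
qed

definition mem :: "nat \<Rightarrow> nat \<Rightarrow> bool" where "mem e S \<longleftrightarrow> e \<in> set_decode S"

lemma mem_odd: "mem e S \<longleftrightarrow> odd (S div 2 ^ e)" by (simp add: mem_def set_decode_def)

lemma PRp_mem[intro]: "PRe n A \<Longrightarrow> PRe n B \<Longrightarrow> PRp n (\<lambda>xs. mem (A xs) (B xs))"
proof -
  assume A: "PRe n A" and B: "PRe n B"
  have "PRp n (\<lambda>xs. \<exists>q<B xs + 1. \<exists>r<2 ^ A xs. B xs = (2 * q + 1) * 2 ^ A xs + r)"
    by (intro pr_intros PRe_pow2 PRe_weak A B | simp only: var_tl)+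
  then show ?thesis by (rule PRp_cong) (simp add: mem_odd odd_div_pow2)
qed

lemma mem_less: "mem e S \<Longrightarrow> e < S"
proof -
  assume "mem e S"
  then have "odd (S div 2 ^ e)" by (simp add: mem_odd)
  then have "S div 2 ^ e \<ge> 1" by (cases "S div 2 ^ e") auto
  then have "2 ^ e \<le> S" using div_greater_zero_iff[of S "2^e"] by simp
  then show ?thesis using less_exp[of e] by linarith
qed

definition tlc :: "nat \<Rightarrow> nat" where "tlc l = psnd (l - 1)"
definition hdc :: "nat \<Rightarrow> nat" where "hdc l = (if l = 0 then 0 else pfst (l - 1))"
definition iterc :: "nat \<Rightarrow> nat \<Rightarrow> nat" where "iterc k l = (tlc ^^ k) l"
definition nthc :: "nat \<Rightarrow> nat \<Rightarrow> nat" where "nthc l i = hdc (iterc i l)"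
definition lenc :: "nat \<Rightarrow> nat" where "lenc l = (\<Sum>i<l. if iterc i l \<noteq> 0 then 1 else 0)"

lemma pe00: "prod_encode (0, 0) = 0" by (simp add: prod_encode_def)
lemma psnd0: "psnd 0 = 0" by (metis pe00 psnd_pe)

lemma tlc_enc[simp]: "tlc (list_encode xs) = list_encode (tl xs)"
  by (cases xs) (auto simp: tlc_def psnd0)
lemma hdc_enc[simp]: "hdc (list_encode xs) = var 0 xs"
  by (cases xs) (auto simp: hdc_def var_def)
lemma iterc_enc[simp]: "iterc k (list_encode xs) = list_encode (drop k xs)"
  by (induction k) (auto simp: iterc_def drop_Suc tl_drop)
lemma nthc_enc[simp]: "nthc (list_encode xs) i = var i xs"
  by (simp add: nthc_def var_def hd_drop_conv_nth)

lemma length_le_enc: "length xs \<le> list_encode xs"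
  by (induction xs) (auto simp: le_prod_encode_2 intro: le_trans)
lemma mem_less_enc: "x \<in> set xs \<Longrightarrow> x < list_encode xs"
proof (induction xs)
  case (Cons y ys) then show ?case
    using le_prod_encode_1[of y "list_encode ys"] le_prod_encode_2[of "list_encode ys" y] by auto
qed simp

lemma enc_zero_iff: "list_encode xs = 0 \<longleftrightarrow> xs = []"
  by (cases xs) auto

lemma lenc_enc[simp]: "lenc (list_encode xs) = length xs"
proof -
  have "lenc (list_encode xs) = (\<Sum>i<list_encode xs. if i < length xs then 1 else 0)"
    unfolding lenc_def by (intro sum.cong) (auto simp: enc_zero_iff)
  also have "\<dots> = card {i. i < list_encode xs \<and> i < length xs}"
    by (simp add: sum.If_cases Int_def)
  also have "{i. i < list_encode xs \<and> i < length xs} = {..<length xs}"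
    using length_le_enc[of xs] by auto
  finally show ?thesis by simp
qed

lemma PRe_tlc[intro]: "PRe n A \<Longrightarrow> PRe n (\<lambda>xs. tlc (A xs))"
  unfolding tlc_def by (intro pr_intros PRe_psnd)

lemma PRe_hdc[intro]: "PRe n A \<Longrightarrow> PRe n (\<lambda>xs. hdc (A xs))"
  unfolding hdc_def by (intro pr_intros PRe_pfst)

lemma PRe_iterc[intro]: "PRe n K \<Longrightarrow> PRe n A \<Longrightarrow> PRe n (\<lambda>xs. iterc (K xs) (A xs))"
proof -
  assume K: "PRe n K" and A: "PRe n A"
  have "PRe n (\<lambda>xs. natrec A (\<lambda>k r xs. tlc r) (K xs) xs)"
    by (rule PRe_rec[OF A _ K]) (intro pr_intros PRe_tlc)
  moreover have "natrec A (\<lambda>k r xs. tlc r) k xs = iterc k (A xs)" for k xs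
    by (induction k) (auto simp: iterc_def)
  ultimately show ?thesis by simp
qed

lemma PRe_nthc[intro]: "PRe n A \<Longrightarrow> PRe n I \<Longrightarrow> PRe n (\<lambda>xs. nthc (A xs) (I xs))"
  unfolding nthc_def by (intro PRe_hdc PRe_iterc)

lemma PRe_lenc[intro]: "PRe n A \<Longrightarrow> PRe n (\<lambda>xs. lenc (A xs))"
  unfolding lenc_def by (intro pr_intros PRe_iterc PRe_weak | simp only: var_tl)+

lemma div5_less: "0 < (c::nat) \<Longrightarrow> c div 5 < c" by simp

lemma elem_dec_less: "u \<in> set (list_decode l) \<Longrightarrow> u < l"
  using mem_less_enc[of u "list_decode l"] by simp

function evc :: "nat \<Rightarrow> nat list \<Rightarrow> nat" where
  "evc c xs = (if c mod 5 = 0 then 0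
    else if c mod 5 = 1 then Suc (var 0 xs)
    else if c mod 5 = 2 then var (c div 5) xs
    else if c mod 5 = 3 then evc (pfst (c div 5)) (map (\<lambda>u. evc u xs) (list_decode (psnd (c div 5))))
    else if var 0 xs = 0 then evc (pfst (c div 5)) (tl xs)
    else evc (psnd (c div 5)) ((var 0 xs - 1) # evc c ((var 0 xs - 1) # tl xs) # tl xs))"
  by pat_completeness auto
termination
proof (relation "measures [\<lambda>(c, xs). c, \<lambda>(c, xs). var 0 xs]", goal_cases)
  case 1 then show ?case by simp
next
  case (2 c xs x)
  then have "0 < c" by (cases c) auto
  then have "c div 5 < c" by (rule div5_less)
  then show ?case using psnd_le[of "c div 5"] elem_dec_less[OF 2(5)] by auto
next
  case (3 c xs)
  then have "0 < c" by (cases c) auto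
  then have "c div 5 < c" by (rule div5_less)
  then show ?case using pfst_le[of "c div 5"] by auto
next
  case (4 c xs)
  then have "0 < c" by (cases c) auto
  then have "c div 5 < c" by (rule div5_less)
  then show ?case using pfst_le[of "c div 5"] by auto
next
  case (5 c xs)
  then show ?case by simp
next
  case (6 c xs)
  then have "0 < c" by (cases c) auto
  then have "c div 5 < c" by (rule div5_less)
  then show ?case using psnd_le[of "c div 5"] by auto
qed

declare evc.simps[simp del]

lemma evc_prec: "c mod 5 = 4 \<Longrightarrow> evc c (k # ys) = prec_fun (evc (pfst (c div 5))) (evc (psnd (c div 5))) k ys"
  by (induction k) (simp_all add: evc.simps[of c])

lemma codes_list: "\<forall>g\<in>set gs. \<exists>c. \<forall>xs. length xs = n \<longrightarrow> g xs = evc c xs \<Longrightarrow>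
  \<exists>cs. \<forall>xs. length xs = n \<longrightarrow> map (\<lambda>g. g xs) gs = map (\<lambda>u. evc u xs) cs"
proof (induction gs)
  case Nil then show ?case by (intro exI[of _ "[]"]) auto
next
  case (Cons g gs)
  then obtain cs where cs: "\<forall>xs. length xs = n \<longrightarrow> map (\<lambda>g. g xs) gs = map (\<lambda>u. evc u xs) cs" by auto
  from Cons.prems obtain c where "\<forall>xs. length xs = n \<longrightarrow> g xs = evc c xs" by auto
  then show ?case using cs by (intro exI[of _ "c # cs"]) auto
qed

lemma PR_code: "PR n f \<Longrightarrow> \<exists>c. \<forall>xs. length xs = n \<longrightarrow> f xs = evc c xs"
proof (induction rule: PR.induct)
  case (zero n) then show ?case by (intro exI[of _ 0] allI impI) (subst evc.simps, simp)
next
  case succ then show ?case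
    by (intro exI[of _ 1] allI impI) (subst evc.simps, auto simp: var_def length_Suc_conv)
next
  case (proj i n)
  have m: "(5*i+2) mod 5 = (2::nat)" "(5*i+2) div 5 = i" by presburger+
  show ?case using proj
    by (intro exI[of _ "5 * i + 2"] allI impI) (subst evc.simps, simp only: m, simp add: var_def)
next
  case (comp m f gs n)
  then obtain cf where cf: "\<forall>xs. length xs = m \<longrightarrow> f xs = evc cf xs" by auto
  from comp obtain cs where cs: "\<forall>xs. length xs = n \<longrightarrow> map (\<lambda>g. g xs) gs = map (\<lambda>u. evc u xs) cs"
    using codes_list[of gs n] by auto
  show ?case
  proof (intro exI[of _ "5 * prod_encode (cf, list_encode cs) + 3"] allI impI)
    fix xs :: "nat list" assume l: "length xs = n"
    have "length (map (\<lambda>g. g xs) gs) = m" using comp by simp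
    then have "f (map (\<lambda>g. g xs) gs) = evc cf (map (\<lambda>g. g xs) gs)" using cf by simp
    also have "\<dots> = evc cf (map (\<lambda>u. evc u xs) cs)" using cs l by simp
    also have "\<dots> = evc (5 * prod_encode (cf, list_encode cs) + 3) xs"
    proof -
      have m: "(5 * prod_encode (cf, list_encode cs) + 3) mod 5 = (3::nat)"
        "(5 * prod_encode (cf, list_encode cs) + 3) div 5 = prod_encode (cf, list_encode cs)" by presburger+
      show ?thesis by (subst (2) evc.simps) (simp only: m, simp)
    qed
    finally show "f (map (\<lambda>g. g xs) gs) = evc (5 * prod_encode (cf, list_encode cs) + 3) xs" .
  qed
next
  case (prec n g h)
  then obtain cg ch where cg: "\<forall>xs. length xs = n \<longrightarrow> g xs = evc cg xs"
    and ch: "\<forall>xs. length xs = Suc (Suc n) \<longrightarrow> h xs = evc ch xs" by auto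
  show ?case
  proof (intro exI[of _ "5 * prod_encode (cg, ch) + 4"] allI impI)
    fix xs :: "nat list" assume l: "length xs = Suc n"
    then obtain k ys where xs: "xs = k # ys" and ly: "length ys = n" by (cases xs) auto
    have "prec_fun g h k ys = prec_fun (evc cg) (evc ch) k ys"
      using ly cg ch by (induction k) auto
    also have "\<dots> = evc (5 * prod_encode (cg, ch) + 4) (k # ys)"
    proof -
      have m: "(5 * prod_encode (cg, ch) + 4) mod 5 = (4::nat)"
        "(5 * prod_encode (cg, ch) + 4) div 5 = prod_encode (cg, ch)" by presburger+
      show ?thesis by (subst evc_prec) (simp only: m, simp)+
    qed
    finally show "prec_fun g h (hd xs) (tl xs) = evc (5 * prod_encode (cg, ch) + 4) xs"
      using xs by simp
  qed
qed

definition tri :: "nat \<Rightarrow> nat \<Rightarrow> nat \<Rightarrow> nat" where "tri c l v = prod_encode (c, prod_encode (l, v))"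

lemma tri_dec[simp]: "pfst (tri c l v) = c" "pfst (psnd (tri c l v)) = l" "psnd (psnd (tri c l v)) = v"
  by (simp_all add: tri_def)

lemma tri_eq[simp]: "tri c l v = tri c' l' v' \<longleftrightarrow> c = c' \<and> l = l' \<and> v = v'"
  by (simp add: tri_def)

lemma tri_ge: "c \<le> tri c l v" "l \<le> tri c l v" "v \<le> tri c l v"
  unfolding tri_def using le_prod_encode_1 le_prod_encode_2 le_trans by blast+

definition Jsem :: "nat set \<Rightarrow> nat \<Rightarrow> nat list \<Rightarrow> nat \<Rightarrow> bool" where
  "Jsem A c xs v = (if c mod 5 = 0 then v = 0
    else if c mod 5 = 1 then v = Suc (var 0 xs)
    else if c mod 5 = 2 then v = var (c div 5) xs
    else if c mod 5 = 3 then (\<exists>ws. length ws = length (list_decode (psnd (c div 5))) \<and>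
         tri (pfst (c div 5)) (list_encode ws) v \<in> A \<and>
         (\<forall>i<length ws. tri (list_decode (psnd (c div 5)) ! i) (list_encode xs) (ws ! i) \<in> A))
    else if var 0 xs = 0 then tri (pfst (c div 5)) (list_encode (tl xs)) v \<in> A
    else (\<exists>w. tri c (list_encode ((var 0 xs - 1) # tl xs)) w \<in> A \<and>
              tri (psnd (c div 5)) (list_encode ((var 0 xs - 1) # w # tl xs)) v \<in> A))"

definition ValidSem :: "nat set \<Rightarrow> bool" where
  "ValidSem A = (\<forall>e\<in>A. Jsem A (pfst e) (list_decode (pfst (psnd e))) (psnd (psnd e)))"

lemma Jsem_mono: "A \<subseteq> B \<Longrightarrow> Jsem A c xs v \<Longrightarrow> Jsem B c xs v"
  unfolding Jsem_def by (auto split: if_splits)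

lemma ValidSem_Union: "\<forall>X\<in>F. ValidSem X \<Longrightarrow> ValidSem (\<Union>F)"
  unfolding ValidSem_def by (meson Jsem_mono Union_iff Union_upper)

lemma ValidSem_insert: "ValidSem A \<Longrightarrow> Jsem A c xs v \<Longrightarrow> ValidSem (insert (tri c (list_encode xs) v) A)"
  unfolding ValidSem_def by (auto intro: Jsem_mono[rotated])

lemma sound: "ValidSem A \<Longrightarrow> tri c (list_encode xs) v \<in> A \<Longrightarrow> v = evc c xs"
proof (induction c xs arbitrary: v rule: evc.induct)
  case (1 c xs)
  have J: "Jsem A c xs v" using "1.prems" unfolding ValidSem_def by force
  consider "c mod 5 = 0" | "c mod 5 = 1" | "c mod 5 = 2" | "c mod 5 = 3" | "c mod 5 = 4" by linarith
  then show ?case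
  proof cases
    case 1 then show ?thesis using J by (simp add: Jsem_def evc.simps)
  next
    case 2 then show ?thesis using J by (simp add: Jsem_def evc.simps)
  next
    case 3 then show ?thesis using J by (simp add: Jsem_def evc.simps)
  next
    case 4
    from 4 have ne: "c mod 5 \<noteq> 0" "c mod 5 \<noteq> 1" "c mod 5 \<noteq> 2" by auto
    define us where "us = list_decode (psnd (c div 5))"
    from J 4 obtain ws where ws: "length ws = length us" "tri (pfst (c div 5)) (list_encode ws) v \<in> A"
      "\<forall>i<length ws. tri (us ! i) (list_encode xs) (ws ! i) \<in> A"
      unfolding Jsem_def us_def by auto
    have wsm: "ws = map (\<lambda>u. evc u xs) us"
    proof (rule nth_equalityI)
      show "length ws = length (map (\<lambda>u. evc u xs) us)" using ws by simp
      fix i assume "i < length ws"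
      then show "ws ! i = map (\<lambda>u. evc u xs) us ! i"
        using "1.IH"(1)[OF ne 4 _ "1.prems"(1), of "us ! i" "ws ! i"] ws unfolding us_def by auto
    qed
    show ?thesis using "1.IH"(2)[OF ne 4 "1.prems"(1)] ws(2) wsm ne 4
      by (subst evc.simps) (simp add: us_def)
  next
    case 5
    from 5 have ne: "c mod 5 \<noteq> 0" "c mod 5 \<noteq> 1" "c mod 5 \<noteq> 2" "c mod 5 \<noteq> 3" by auto
    show ?thesis
    proof (cases "var 0 xs = 0")
      case True
      then show ?thesis using J ne "1.IH"(3)[OF ne True "1.prems"(1)] by (subst evc.simps) (simp add: Jsem_def)
    next
      case False
      from J 5 False obtain w where w: "tri c (list_encode ((var 0 xs - 1) # tl xs)) w \<in> A"
        "tri (psnd (c div 5)) (list_encode ((var 0 xs - 1) # w # tl xs)) v \<in> A"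
        unfolding Jsem_def by auto
      have "w = evc c ((var 0 xs - 1) # tl xs)" using "1.IH"(4)[OF ne False "1.prems"(1) w(1)] .
      then show ?thesis using "1.IH"(5)[OF ne False "1.prems"(1)] ne False w(2) by (subst evc.simps) simp
    qed
  qed
qed

lemma ValidSem_empty: "ValidSem {}" by (simp add: ValidSem_def)

lemma ValidSem_Un: "ValidSem A \<Longrightarrow> ValidSem B \<Longrightarrow> ValidSem (A \<union> B)"
  using ValidSem_Union[of "{A, B}"] by auto

lemma complete: "\<exists>A. finite A \<and> ValidSem A \<and> tri c (list_encode xs) (evc c xs) \<in> A"
proof (induction c xs rule: evc.induct)
  case (1 c xs)
  consider "c mod 5 = 0" | "c mod 5 = 1" | "c mod 5 = 2" | "c mod 5 = 3" | "c mod 5 = 4" by linarith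
  then show ?case
  proof cases
    case 1
    then have "Jsem {} c xs (evc c xs)" by (subst evc.simps) (simp add: Jsem_def)
    then have "ValidSem (insert (tri c (list_encode xs) (evc c xs)) {})"
      by (rule ValidSem_insert[OF ValidSem_empty])
    then show ?thesis by (intro exI[of _ "{tri c (list_encode xs) (evc c xs)}"]) simp
  next
    case 2
    then have "Jsem {} c xs (evc c xs)" by (subst evc.simps) (simp add: Jsem_def)
    then have "ValidSem (insert (tri c (list_encode xs) (evc c xs)) {})"
      by (rule ValidSem_insert[OF ValidSem_empty])
    then show ?thesis by (intro exI[of _ "{tri c (list_encode xs) (evc c xs)}"]) simp
  next
    case 3
    then have "Jsem {} c xs (evc c xs)" by (subst evc.simps) (simp add: Jsem_def)
    then have "ValidSem (insert (tri c (list_encode xs) (evc c xs)) {})"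
      by (rule ValidSem_insert[OF ValidSem_empty])
    then show ?thesis by (intro exI[of _ "{tri c (list_encode xs) (evc c xs)}"]) simp
  next
    case 4
    from 4 have ne: "c mod 5 \<noteq> 0" "c mod 5 \<noteq> 1" "c mod 5 \<noteq> 2" by auto
    define us where "us = list_decode (psnd (c div 5))"
    have "\<forall>u\<in>set us. \<exists>A. finite A \<and> ValidSem A \<and> tri u (list_encode xs) (evc u xs) \<in> A"
      using "1.IH"(1)[OF ne 4] unfolding us_def by blast
    from bchoice[OF this] obtain F where F: "\<forall>u\<in>set us. finite (F u) \<and> ValidSem (F u) \<and> tri u (list_encode xs) (evc u xs) \<in> F u"
      by blast
    obtain A0 where A0: "finite A0" "ValidSem A0"
      "tri (pfst (c div 5)) (list_encode (map (\<lambda>u. evc u xs) us)) (evc (pfst (c div 5)) (map (\<lambda>u. evc u xs) us)) \<in> A0"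
      using "1.IH"(2)[OF ne 4] unfolding us_def by blast
    define B where "B = A0 \<union> \<Union>(F ` set us)"
    have fB: "finite B" using A0 F unfolding B_def by auto
    have vB: "ValidSem B" unfolding B_def using A0 F by (intro ValidSem_Un ValidSem_Union) auto
    have ev: "evc c xs = evc (pfst (c div 5)) (map (\<lambda>u. evc u xs) us)"
      using ne 4 unfolding us_def by (subst evc.simps) simp
    have allB: "\<forall>i<length us. tri (us ! i) (list_encode xs) (evc (us ! i) xs) \<in> B"
    proof (intro allI impI)
      fix i assume "i < length us"
      then have "us ! i \<in> set us" by simp
      then show "tri (us ! i) (list_encode xs) (evc (us ! i) xs) \<in> B" using F unfolding B_def by blast
    qed
    have A0B: "A0 \<subseteq> B" unfolding B_def by blast
    have "Jsem B c xs (evc c xs)"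
      unfolding Jsem_def using ne 4
      apply (simp add: us_def[symmetric])
      apply (rule exI[of _ "map (\<lambda>u. evc u xs) us"])
      using A0(3) A0B allB ev by auto
    then have "ValidSem (insert (tri c (list_encode xs) (evc c xs)) B)"
      by (rule ValidSem_insert[OF vB])
    then show ?thesis using fB by (intro exI[of _ "insert (tri c (list_encode xs) (evc c xs)) B"]) simp
  next
    case 5
    from 5 have ne: "c mod 5 \<noteq> 0" "c mod 5 \<noteq> 1" "c mod 5 \<noteq> 2" "c mod 5 \<noteq> 3" by auto
    show ?thesis
    proof (cases "var 0 xs = 0")
      case True
      obtain A0 where A0: "finite A0" "ValidSem A0"
        "tri (pfst (c div 5)) (list_encode (tl xs)) (evc (pfst (c div 5)) (tl xs)) \<in> A0"
        using "1.IH"(3)[OF ne True] by blast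
      have "Jsem A0 c xs (evc c xs)" using ne True A0(3) by (subst evc.simps) (simp add: Jsem_def)
      then have "ValidSem (insert (tri c (list_encode xs) (evc c xs)) A0)"
        by (rule ValidSem_insert[OF A0(2)])
      then show ?thesis using A0(1) by (intro exI[of _ "insert (tri c (list_encode xs) (evc c xs)) A0"]) simp
    next
      case False
      define w where "w = evc c ((var 0 xs - 1) # tl xs)"
      obtain A1 where A1: "finite A1" "ValidSem A1"
        "tri c (list_encode ((var 0 xs - 1) # tl xs)) w \<in> A1"
        using "1.IH"(4)[OF ne False] unfolding w_def by blast
      obtain A2 where A2: "finite A2" "ValidSem A2"
        "tri (psnd (c div 5)) (list_encode ((var 0 xs - 1) # w # tl xs)) (evc (psnd (c div 5)) ((var 0 xs - 1) # w # tl xs)) \<in> A2"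
        using "1.IH"(5)[OF ne False] unfolding w_def by blast
      have ev: "evc c xs = evc (psnd (c div 5)) ((var 0 xs - 1) # w # tl xs)"
        using ne False unfolding w_def by (subst evc.simps) simp
      have "Jsem (A1 \<union> A2) c xs (evc c xs)" unfolding Jsem_def using ne False A1(3) A2(3) ev by auto
      then have "ValidSem (insert (tri c (list_encode xs) (evc c xs)) (A1 \<union> A2))"
        by (rule ValidSem_insert[OF ValidSem_Un[OF A1(2) A2(2)]])
      then show ?thesis using A1(1) A2(1) by (intro exI[of _ "insert (tri c (list_encode xs) (evc c xs)) (A1 \<union> A2)"]) simp
    qed
  qed
qed

lemma PRp_if[intro]: "PRp n P \<Longrightarrow> PRp n Q \<Longrightarrow> PRp n R \<Longrightarrow> PRp n (\<lambda>xs. if P xs then Q xs else R xs)"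
proof -
  assume P: "PRp n P" and Q: "PRp n Q" and R: "PRp n R"
  have "PRp n (\<lambda>xs. (P xs \<and> Q xs) \<or> (\<not> P xs \<and> R xs))" using P Q R by (intro PRp_disj PRp_conj PRp_not)
  then show ?thesis by (rule PRp_cong) auto
qed

lemma PRe_tri[intro]: "PRe n A \<Longrightarrow> PRe n B \<Longrightarrow> PRe n C \<Longrightarrow> PRe n (\<lambda>xs. tri (A xs) (B xs) (C xs))"
  unfolding tri_def by (intro PRe_pe)

definition jc :: "nat \<Rightarrow> nat \<Rightarrow> nat \<Rightarrow> nat \<Rightarrow> bool" where
  "jc S c l v = (if c mod 5 = 0 then v = 0
    else if c mod 5 = 1 then v = Suc (hdc l)
    else if c mod 5 = 2 then v = nthc l (c div 5)
    else if c mod 5 = 3 then (\<exists>wl<S. lenc wl = lenc (psnd (c div 5)) \<and> mem (tri (pfst (c div 5)) wl v) S \<and>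
          (\<forall>i<lenc (psnd (c div 5)). mem (tri (nthc (psnd (c div 5)) i) l (nthc wl i)) S))
    else if hdc l = 0 then mem (tri (pfst (c div 5)) (tlc l) v) S
    else (\<exists>w<S. mem (tri c (Suc (prod_encode (hdc l - 1, tlc l))) w) S \<and>
            mem (tri (psnd (c div 5)) (Suc (prod_encode (hdc l - 1, Suc (prod_encode (w, tlc l))))) v) S))"

lemma mem_tri_less: "mem (tri c l v) S \<Longrightarrow> c < S \<and> l < S \<and> v < S"
  using mem_less[of "tri c l v" S] tri_ge[where c=c and l=l and v=v] by linarith

lemma jc_sem: "jc S c (list_encode xs) v \<longleftrightarrow> Jsem (set_decode S) c xs v"
proof -
  define us where "us = list_decode (psnd (c div 5))"
  have pq: "psnd (c div 5) = list_encode us" unfolding us_def by simp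
  have memd: "mem e S \<longleftrightarrow> e \<in> set_decode S" for e by (simp add: mem_def)
  consider "c mod 5 = 0" | "c mod 5 = 1" | "c mod 5 = 2" | "c mod 5 = 3" | "c mod 5 = 4" by linarith
  then show ?thesis
  proof cases
    case 4
    have "(\<exists>wl<S. lenc wl = length us \<and> mem (tri (pfst (c div 5)) wl v) S \<and>
          (\<forall>i<length us. mem (tri (var i us) (list_encode xs) (nthc wl i)) S)) \<longleftrightarrow>
          (\<exists>ws. length ws = length us \<and> tri (pfst (c div 5)) (list_encode ws) v \<in> set_decode S \<and>
         (\<forall>i<length ws. tri (us ! i) (list_encode xs) (ws ! i) \<in> set_decode S))" (is "?L \<longleftrightarrow> ?R")
    proof
      assume ?L
      then obtain wl where wl: "lenc wl = length us" "mem (tri (pfst (c div 5)) wl v) S"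
        "\<forall>i<length us. mem (tri (var i us) (list_encode xs) (nthc wl i)) S" by blast
      define ws where "ws = list_decode wl"
      have wl': "wl = list_encode ws" unfolding ws_def by simp
      show ?R using wl unfolding wl' memd by (intro exI[of _ ws]) (auto simp: var_def)
    next
      assume ?R
      then obtain ws where ws: "length ws = length us" "tri (pfst (c div 5)) (list_encode ws) v \<in> set_decode S"
         "\<forall>i<length ws. tri (us ! i) (list_encode xs) (ws ! i) \<in> set_decode S" by blast
      have "list_encode ws < S" using mem_tri_less[of _ "list_encode ws" v S] ws(2) by (simp add: memd)
      then show ?L using ws by (intro exI[of _ "list_encode ws"]) (auto simp: var_def memd)
    qed
    then show ?thesis using 4 unfolding jc_def Jsem_def pq by (simp add: us_def[symmetric])
  next
    case 5
    have "(\<exists>w<S. mem (tri c (list_encode ((var 0 xs - 1) # tl xs)) w) S \<and>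
            mem (tri (psnd (c div 5)) (list_encode ((var 0 xs - 1) # w # tl xs)) v) S) \<longleftrightarrow>
          (\<exists>w. tri c (list_encode ((var 0 xs - 1) # tl xs)) w \<in> set_decode S \<and>
              tri (psnd (c div 5)) (list_encode ((var 0 xs - 1) # w # tl xs)) v \<in> set_decode S)"
      using mem_tri_less memd by blast
    then show ?thesis using 5 unfolding jc_def Jsem_def by (simp add: memd)
  qed (auto simp: jc_def Jsem_def)
qed

definition ValidCode :: "nat \<Rightarrow> bool" where
  "ValidCode S = (\<forall>e<S. mem e S \<longrightarrow> jc S (pfst e) (pfst (psnd e)) (psnd (psnd e)))"

lemma ValidCode_sem: "ValidCode S \<longleftrightarrow> ValidSem (set_decode S)"
proof -
  have "jc S (pfst e) (pfst (psnd e)) (psnd (psnd e)) \<longleftrightarrow>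
        Jsem (set_decode S) (pfst e) (list_decode (pfst (psnd e))) (psnd (psnd e))" for e
    using jc_sem[of S "pfst e" "list_decode (pfst (psnd e))" "psnd (psnd e)"] by simp
  then show ?thesis unfolding ValidCode_def ValidSem_def using mem_less by (auto simp: mem_def)
qed

definition Cert :: "nat \<Rightarrow> nat \<Rightarrow> nat \<Rightarrow> nat \<Rightarrow> bool" where
  "Cert s c x v = (ValidCode s \<and> mem (tri c (Suc (prod_encode (x, 0))) v) s)"

lemma enc_single: "list_encode [x] = Suc (prod_encode (x, 0))" by simp

lemma cert_sound: "Cert s c x v \<Longrightarrow> v = evc c [x]"
  unfolding Cert_def ValidCode_sem using sound[of "set_decode s" c "[x]" v]
  by (simp add: mem_def)

lemma cert_complete: "\<exists>s. Cert s c x (evc c [x])"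
proof -
  obtain A where A: "finite A" "ValidSem A" "tri c (list_encode [x]) (evc c [x]) \<in> A"
    using complete by blast
  show ?thesis
    by (intro exI[of _ "set_encode A"]) (use A in \<open>simp add: Cert_def ValidCode_sem mem_def\<close>)
qed

lemma cert_bound: "Cert s c x v \<Longrightarrow> v < s"
  unfolding Cert_def using mem_tri_less by blast

lemma PRp_jc[intro]: "PRe n S \<Longrightarrow> PRe n C \<Longrightarrow> PRe n L \<Longrightarrow> PRe n V \<Longrightarrow>
  PRp n (\<lambda>xs. jc (S xs) (C xs) (L xs) (V xs))"
  unfolding jc_def
  by (intro pr_intros PRp_if PRe_tri PRp_mem PRe_pfst PRe_psnd PRe_mod5 PRe_div5 PRe_hdc PRe_tlc PRe_nthc
        PRe_lenc PRe_pe PRe_weak | simp only: var_tl | assumption)+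

lemma PRp_Cert[intro]: "PRe n S \<Longrightarrow> PRe n C \<Longrightarrow> PRe n X \<Longrightarrow> PRe n V \<Longrightarrow>
  PRp n (\<lambda>xs. Cert (S xs) (C xs) (X xs) (V xs))"
  unfolding Cert_def ValidCode_def
  by (intro pr_intros PRp_jc PRe_tri PRp_mem PRe_pfst PRe_psnd PRe_pe PRe_weak | simp only: var_tl | assumption)+

definition dn :: "nat \<Rightarrow> nat \<Rightarrow> nat \<Rightarrow> bool" where
  "dn c k j = (k < j \<and> (\<exists>v<j - k. Cert (j - k - 1) c k v))"

fun st :: "nat \<Rightarrow> nat" where
  "st 0 = prod_encode (0, 1)"
| "st (Suc j) = (if dn (pfst (st j)) (psnd (st j)) j then prod_encode (Suc (pfst (st j)), Suc j) else st j)"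

definition D :: "nat \<Rightarrow> nat" where
  "D j = (if dn (pfst (st j)) (psnd (st j)) j then
            (if Cert (j - psnd (st j) - 1) (pfst (st j)) (psnd (st j)) 0 then 0 else 2) else 1)"

lemma PRp_dn[intro]: "PRe n C \<Longrightarrow> PRe n K \<Longrightarrow> PRe n J \<Longrightarrow> PRp n (\<lambda>xs. dn (C xs) (K xs) (J xs))"
  unfolding dn_def
  by (intro pr_intros PRp_Cert PRe_weak | simp only: var_tl | assumption)+

lemma PRe_st[intro]: "PRe n J \<Longrightarrow> PRe n (\<lambda>xs. st (J xs))"
proof -
  assume J: "PRe n J"
  have "PRe n (\<lambda>xs. natrec (\<lambda>_. prod_encode (0, 1))
      (\<lambda>j r xs. if dn (pfst r) (psnd r) j then prod_encode (Suc (pfst r), Suc j) else r) (J xs) xs)"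
    by (rule PRe_rec[OF _ _ J]) (intro pr_intros PRp_dn PRe_pfst PRe_psnd PRe_pe)+
  moreover have "natrec (\<lambda>_. prod_encode (0, 1))
      (\<lambda>j r xs. if dn (pfst r) (psnd r) j then prod_encode (Suc (pfst r), Suc j) else r) j xs = st j" for j xs
    by (induction j) auto
  ultimately show ?thesis by simp
qed

lemma PRe_var01: "PRe 1 (\<lambda>xs. var 0 xs)" by (rule PRe_var) simp

lemma PRe_D: "PRe 1 (\<lambda>xs. D (var 0 xs))"
  unfolding D_def
  by (intro pr_intros PRe_var01 PRp_dn PRp_Cert PRe_st PRe_pfst PRe_psnd)+

lemma prim_rec1_of_PRe: "PRe 1 (\<lambda>xs. P (var 0 xs)) \<Longrightarrow> prim_rec1 P"
  unfolding PRe_def prim_rec1_def by (auto simp: var_def)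

lemma PRe_of_prim_rec1: "prim_rec1 P \<Longrightarrow> PRe 1 (\<lambda>xs. P (var 0 xs))"
  unfolding PRe_def prim_rec1_def
proof (elim exE conjE, intro exI conjI allI impI)
  fix f assume f: "PR 1 f" "\<forall>x. P x = f [x]"
  show "PR 1 f" by (rule f)
  fix xs :: "nat list" assume "length xs = 1"
  then obtain y where "xs = [y]" by (cases xs) auto
  then show "f xs = P (var 0 xs)" using f by simp
qed

lemma prim_rec1_D: "prim_rec1 D"
  by (rule prim_rec1_of_PRe[OF PRe_D])

lemma D_le: "D j \<le> 2" by (simp add: D_def)

lemma ex_cert: "\<exists>s v. Cert s c k v" using cert_complete by blast

lemma block:
  assumes st0: "st j0 = prod_encode (c, j0)"
  defines "s0 \<equiv> LEAST s. \<exists>v. Cert s c j0 v"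
  shows "\<forall>j. j0 \<le> j \<and> j < j0 + s0 + 1 \<longrightarrow> D j = 1"
    and "D (j0 + s0 + 1) = (if evc c [j0] = 0 then 0 else 2)"
    and "st (Suc (j0 + s0 + 1)) = prod_encode (Suc c, Suc (j0 + s0 + 1))"
proof -
  have s0: "\<exists>v. Cert s0 c j0 v" unfolding s0_def using ex_cert by (rule LeastI_ex)
  have nos: "\<not> (\<exists>v. Cert s c j0 v)" if "s < s0" for s using not_less_Least[of s] that unfolding s0_def by blast
  have ndn: "\<not> dn c j0 j" if "j < j0 + s0 + 1" for j
  proof
    assume "dn c j0 j"
    then have "j0 < j" "\<exists>v. Cert (j - j0 - 1) c j0 v" unfolding dn_def by auto
    moreover have "j - j0 - 1 < s0" using that \<open>j0 < j\<close> by linarith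
    ultimately show False using nos by blast
  qed
  have stj: "st j = prod_encode (c, j0)" if "j0 \<le> j" "j \<le> j0 + s0 + 1" for j
    using that
  proof (induction j)
    case 0 then show ?case using st0 by simp
  next
    case (Suc j)
    show ?case
    proof (cases "j0 = Suc j")
      case True then show ?thesis using st0 by simp
    next
      case False
      then have "j0 \<le> j" "j < j0 + s0 + 1" using Suc.prems by auto
      then show ?thesis using Suc.IH ndn[of j] by simp
    qed
  qed
  show "\<forall>j. j0 \<le> j \<and> j < j0 + s0 + 1 \<longrightarrow> D j = 1"
    using stj ndn by (auto simp: D_def)
  obtain v where v: "Cert s0 c j0 v" using s0 by blast
  have vl: "v < Suc s0" using cert_bound[OF v] by simp
  have dna: "dn c j0 (j0 + s0 + 1)" unfolding dn_def using v vl by auto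
  have sta: "st (j0 + s0 + 1) = prod_encode (c, j0)" by (rule stj) auto
  have c0: "Cert s0 c j0 0 \<longleftrightarrow> evc c [j0] = 0"
    using v cert_sound[OF v] cert_sound[of s0 c j0 0] by auto
  show "D (j0 + s0 + 1) = (if evc c [j0] = 0 then 0 else 2)"
    using sta dna c0 by (simp add: D_def)
  show "st (Suc (j0 + s0 + 1)) = prod_encode (Suc c, Suc (j0 + s0 + 1))"
    using sta dna by simp
qed

lemma block_start_D: "st j = prod_encode (c, j) \<Longrightarrow> D j = 1"
  by (simp add: D_def dn_def)

lemma blocks_exist: "\<exists>k\<ge>1. st k = prod_encode (c, k)"
proof (induction c)
  case 0
  have "\<not> dn 0 1 0" by (simp add: dn_def)
  then have "st 1 = prod_encode (0, 1)" by simp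
  then show ?case by blast
next
  case (Suc c)
  then obtain k where "k \<ge> 1" "st k = prod_encode (c, k)" by blast
  from block(3)[OF this(2)] show ?case by (intro exI[of _ "Suc (k + (LEAST s. \<exists>v. Cert s c k v) + 1)"]) auto
qed

definition tl_sum :: "(nat \<Rightarrow> int) \<Rightarrow> nat \<Rightarrow> real" where
  "tl_sum u k = (\<Sum>i. of_int (u (Suc (k + i))) / 2 ^ Suc i)"

fun Wz :: "(nat \<Rightarrow> int) \<Rightarrow> nat \<Rightarrow> int" where
  "Wz u 0 = 0"
| "Wz u (Suc k) = 2 * Wz u k + u (Suc k)"

lemma geo_half: "summable (\<lambda>i. (1/2::real) ^ Suc i)" "(\<Sum>i. (1/2::real) ^ Suc i) = 1"
proof -
  have s: "summable (\<lambda>i. (1/2::real) ^ i)" by (rule summable_geometric) simp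
  show "summable (\<lambda>i. (1/2::real) ^ Suc i)" using summable_mult[OF s, of "1/2"] by simp
  have "(\<Sum>i. (1/2::real) ^ Suc i) = (1/2) * (\<Sum>i. (1/2::real) ^ i)"
    using suminf_mult[OF s, of "1/2"] by simp
  also have "\<dots> = 1" using suminf_geometric[of "1/2::real"] by simp
  finally show "(\<Sum>i. (1/2::real) ^ Suc i) = 1" .
qed

lemma summ: assumes "\<forall>j. \<bar>u j\<bar> \<le> 1" shows "summable (\<lambda>i. of_int (u (f i)) / 2 ^ Suc i :: real)"
proof (rule summable_comparison_test[OF _ geo_half(1)])
  show "\<exists>N. \<forall>n\<ge>N. norm (of_int (u (f n)) / 2 ^ Suc n :: real) \<le> (1/2) ^ Suc n"
  proof (intro exI allI impI)
    fix n :: nat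
    have "\<bar>real_of_int (u (f n))\<bar> \<le> 1" using assms by (metis of_int_abs of_int_le_1_iff)
    then show "norm (of_int (u (f n)) / 2 ^ Suc n :: real) \<le> (1/2) ^ Suc n"
      by (simp add: power_one_over divide_le_cancel abs_divide del: power_Suc)
  qed
qed

lemma tl_bound: assumes "\<forall>j. \<bar>u j\<bar> \<le> 1" shows "\<bar>tl_sum u k\<bar> \<le> 1"
proof -
  have s: "summable (\<lambda>i. of_int (u (Suc (k + i))) / 2 ^ Suc i :: real)" using summ[OF assms] .
  have b: "\<bar>real_of_int (u j)\<bar> \<le> 1" for j using assms by (metis of_int_abs of_int_le_1_iff)
  have le: "of_int (u (Suc (k + i))) / 2 ^ Suc i \<le> (1/2::real) ^ Suc i" for i
    using b[of "Suc (k+i)"] by (simp add: power_one_over divide_le_cancel del: power_Suc)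
  have ge: "- ((1/2::real) ^ Suc i) \<le> of_int (u (Suc (k + i))) / 2 ^ Suc i" for i
  proof -
    have "-1 \<le> real_of_int (u (Suc (k + i)))" using b[of "Suc (k+i)"] by (simp add: abs_le_iff)
    then have "(-1) / 2 ^ Suc i \<le> real_of_int (u (Suc (k + i))) / 2 ^ Suc i"
      by (rule divide_right_mono) simp
    then show ?thesis by (simp add: power_one_over del: power_Suc)
  qed
  have "tl_sum u k \<le> 1" unfolding tl_sum_def using suminf_le[OF le s geo_half(1)] geo_half(2) by simp
  moreover have "- 1 \<le> tl_sum u k" unfolding tl_sum_def
    using suminf_le[OF ge summable_minus[OF geo_half(1)] s] geo_half(2) suminf_minus[OF geo_half(1)] by simp
  ultimately show ?thesis by simp
qed

lemma tl_nonneg: assumes "\<forall>j. 0 \<le> u j \<and> u j \<le> 1" shows "0 \<le> tl_sum u k"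
proof -
  have "\<forall>j. \<bar>u j\<bar> \<le> 1" using assms by auto
  then have s: "summable (\<lambda>i. of_int (u (Suc (k + i))) / 2 ^ Suc i :: real)" by (rule summ)
  have "0 \<le> of_int (u (Suc (k + i))) / (2::real) ^ Suc i" for i using assms by simp
  then show ?thesis unfolding tl_sum_def by (rule suminf_nonneg[OF s])
qed

lemma tl_step: assumes "\<forall>j. \<bar>u j\<bar> \<le> 1"
  shows "tl_sum u k = (of_int (u (Suc k)) + tl_sum u (Suc k)) / 2"
proof -
  define f :: "nat \<Rightarrow> real" where "f i = of_int (u (Suc (k + i))) / 2 ^ Suc i" for i
  have s: "summable f" unfolding f_def using summ[OF assms] .
  have "(\<Sum>i. f (Suc i)) = suminf f - f 0" by (rule suminf_split_head[OF s])
  moreover have "(\<lambda>i. f (Suc i)) = (\<lambda>i. (of_int (u (Suc (Suc k + i))) / 2 ^ Suc i) / 2)"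
    unfolding f_def by (auto simp: field_simps)
  moreover have "(\<Sum>i. (of_int (u (Suc (Suc k + i))) / 2 ^ Suc i) / (2::real)) = tl_sum u (Suc k) / 2"
    unfolding tl_sum_def by (rule suminf_divide[OF summ[OF assms]])
  ultimately have "tl_sum u (Suc k) / 2 = tl_sum u k - f 0" unfolding tl_sum_def f_def by simp
  then show ?thesis unfolding f_def by simp
qed

lemma main_split: assumes "\<forall>j. \<bar>u j\<bar> \<le> 1"
  shows "2 ^ k * (\<Sum>i. of_int (u (Suc i)) / 2 ^ Suc i) = of_int (Wz u k) + tl_sum u k"
proof (induction k)
  case 0 then show ?case by (simp add: tl_sum_def)
next
  case (Suc k)
  have "2 ^ Suc k * (\<Sum>i. of_int (u (Suc i)) / 2 ^ Suc i) = 2 * (of_int (Wz u k) + tl_sum u k)"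
    using Suc by simp
  also have "\<dots> = of_int (Wz u (Suc k)) + tl_sum u (Suc k)"
    using tl_step[OF assms, of k] by simp
  finally show ?case .
qed

lemma tl_zeros: assumes "\<forall>j. \<bar>u j\<bar> \<le> 1" and "\<forall>j. m < j \<and> j \<le> m + r \<longrightarrow> u j = 0"
  shows "tl_sum u m = tl_sum u (m + r) / 2 ^ r"
  using assms(2)
proof (induction r)
  case 0 then show ?case by simp
next
  case (Suc r)
  have "tl_sum u m = tl_sum u (m + r) / 2 ^ r" using Suc by simp
  also have "tl_sum u (m + r) = (of_int (u (Suc (m + r))) + tl_sum u (Suc (m + r))) / 2"
    by (rule tl_step[OF assms(1)])
  also have "u (Suc (m + r)) = 0" using Suc.prems by simp
  finally show ?case by simp
qed

lemma key:
  fixes P :: "nat \<Rightarrow> nat" and d :: "nat \<Rightarrow> int" and I :: int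
  assumes P1: "\<forall>j. P j \<le> 1" and dd: "\<forall>j. \<bar>d j\<bar> \<le> 1"
    and eq: "of_int I + (\<Sum>i. real (P (Suc i)) / 2 ^ Suc i) = (\<Sum>i. of_int (d (Suc i)) / 2 ^ Suc i)"
    and k: "k \<ge> 1" and dk: "d k = 0"
    and s0: "P k = 0 \<Longrightarrow> tl_sum d k < 0 \<and> - 1 < tl_sum d k"
    and s1: "P k = 1 \<Longrightarrow> 0 < tl_sum d k \<and> tl_sum d k < 1"
  shows False
proof -
  define Pz where "Pz j = int (P j)" for j
  have Pz1: "\<forall>j. \<bar>Pz j\<bar> \<le> 1" "\<forall>j. 0 \<le> Pz j \<and> Pz j \<le> 1" using P1 unfolding Pz_def by auto
  have "(\<Sum>i. real (P (Suc i)) / 2 ^ Suc i) = (\<Sum>i. of_int (Pz (Suc i)) / 2 ^ Suc i)"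
    unfolding Pz_def by simp
  then have "2 ^ k * (of_int I + (\<Sum>i. of_int (Pz (Suc i)) / 2 ^ Suc i)) = 2 ^ k * (\<Sum>i. of_int (d (Suc i)) / 2 ^ Suc i :: real)"
    using eq by simp
  then have E: "2 ^ k * of_int I + of_int (Wz Pz k) + tl_sum Pz k = of_int (Wz d k) + tl_sum d k"
    using main_split[OF Pz1(1), of k] main_split[OF dd, of k] by (simp add: distrib_left)
  obtain k' where k': "k = Suc k'" using k by (cases k) auto
  have Wd: "Wz d k = 2 * Wz d k'" using dk k' by simp
  have WP: "Wz Pz k = 2 * Wz Pz k' + int (P k)" using k' by (simp add: Pz_def)
  define z where "z = Wz d k' - Wz Pz k' - 2 ^ k' * I"
  have "real_of_int (2 ^ k * I + Wz Pz k - Wz d k) = tl_sum d k - tl_sum Pz k" using E by simp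
  then have Z: "real (P k) = 2 * of_int z + tl_sum d k - tl_sum Pz k"
    unfolding z_def using Wd WP k' by (simp add: algebra_simps)
  have t0: "0 \<le> tl_sum Pz k" by (rule tl_nonneg[OF Pz1(2)])
  have t1: "tl_sum Pz k \<le> 1" using tl_bound[OF Pz1(1), of k] by simp
  have "P k \<le> 1" using P1 by blast
  then have "P k = 0 \<or> P k = 1" by linarith
  then have zb: "0 < real_of_int z \<and> real_of_int z < 1"
  proof
    assume h: "P k = 0"
    then show ?thesis using Z s0[OF h] t0 t1 by linarith
  next
    assume h: "P k = 1"
    then show ?thesis using Z s1[OF h] t0 t1 by linarith
  qed
  then have "0 < z" "z < 1" by simp_all
  then show False by linarith
qed

lemma x0_notin: "(\<Sum>i. (real (D (Suc i)) - 1) / 2 ^ Suc i) \<notin> PRCN"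
proof
  assume "(\<Sum>i. (real (D (Suc i)) - 1) / 2 ^ Suc i) \<in> PRCN"
  then obtain I P where P: "prim_rec1 P" "\<forall>i. P i \<le> 1"
    "(\<Sum>i. (real (D (Suc i)) - 1) / 2 ^ Suc i) = of_int I + (\<Sum>i. real (P (Suc i)) / 2 ^ Suc i)"
    unfolding PRCN_def by blast
  from P(1) obtain f where f: "PR 1 f" "\<forall>x. P x = f [x]" unfolding prim_rec1_def by blast
  from PR_code[OF f(1)] obtain c where c: "\<forall>xs. length xs = 1 \<longrightarrow> f xs = evc c xs" by blast
  have Pc: "P x = evc c [x]" for x using f(2) c by simp
  obtain k where k: "k \<ge> 1" "st k = prod_encode (c, k)" using blocks_exist by blast
  define s0 where "s0 = (LEAST s. \<exists>v. Cert s c k v)"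
  define a where "a = k + s0 + 1"
  have B1: "\<forall>j. k \<le> j \<and> j < a \<longrightarrow> D j = 1" using block(1)[OF k(2)] unfolding a_def s0_def .
  have B2: "D a = (if P k = 0 then 0 else 2)" using block(2)[OF k(2)] Pc unfolding a_def s0_def by simp
  have B3: "D (Suc a) = 1" using block(3)[OF k(2)] block_start_D unfolding a_def s0_def by blast
  define d where "d j = int (D j) - 1" for j
  have dd: "\<forall>j. \<bar>d j\<bar> \<le> 1"
  proof
    fix j show "\<bar>d j\<bar> \<le> 1" using D_le[of j] unfolding d_def by (simp add: abs_le_iff)
  qed
  have eqf: "(\<lambda>i. (real (D (Suc i)) - 1) / 2 ^ Suc i) = (\<lambda>i. of_int (d (Suc i)) / 2 ^ Suc i)"
    unfolding d_def by simp
  have eq: "of_int I + (\<Sum>i. real (P (Suc i)) / 2 ^ Suc i) = (\<Sum>i. of_int (d (Suc i)) / 2 ^ Suc i)"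
    using P(3) eqf by simp
  have dk: "d k = 0" using B1 unfolding d_def a_def by simp
  have tau: "tl_sum d k = tl_sum d (k + s0) / 2 ^ s0"
    by (rule tl_zeros[OF dd]) (use B1 in \<open>auto simp: d_def a_def\<close>)
  have T: "tl_sum d (k + s0) = (of_int (d a) + tl_sum d a) / 2"
    using tl_step[OF dd, of "k + s0"] unfolding a_def by simp
  have Ta: "tl_sum d a = tl_sum d (Suc a) / 2"
  proof -
    have "d (Suc a) = 0" using B3 by (simp add: d_def)
    then show ?thesis using tl_step[OF dd, of a] by simp
  qed
  have tb: "\<bar>tl_sum d (Suc a)\<bar> \<le> 1" by (rule tl_bound[OF dd])
  have da: "d a = (if P k = 0 then -1 else 1)" using B2 unfolding d_def by simp
  define p :: real where "p = 2 ^ s0"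
  have p1: "1 \<le> p" unfolding p_def by simp
  have p0: "0 < p" using p1 by simp
  show False
  proof (rule key[OF P(2) dd eq k(1) dk])
    assume h: "P k = 0"
    define TT where "TT = tl_sum d (k + s0)"
    have TT: "TT \<le> -1/4" "- 3/4 \<le> TT" using T Ta tb da h unfolding TT_def by (auto simp: abs_le_iff)
    have "TT * p \<le> TT * 1" by (rule mult_left_mono_neg) (use p1 TT in auto)
    then have "TT \<le> TT / p" using p0 by (simp add: pos_le_divide_eq)
    moreover have "TT / p < 0" using TT p0 by (simp add: divide_neg_pos)
    moreover have "tl_sum d k = TT / p" using tau unfolding TT_def p_def .
    ultimately show "tl_sum d k < 0 \<and> - 1 < tl_sum d k" using TT by linarith
  next
    assume h: "P k = 1"
    define TT where "TT = tl_sum d (k + s0)"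
    have TT: "1/4 \<le> TT" "TT \<le> 3/4" using T Ta tb da h unfolding TT_def by (auto simp: abs_le_iff)
    have "TT * 1 \<le> TT * p" by (rule mult_left_mono) (use p1 TT in auto)
    then have "TT / p \<le> TT" using p0 by (simp add: pos_divide_le_eq)
    moreover have "0 < TT / p" using TT p0 by simp
    moreover have "tl_sum d k = TT / p" using tau unfolding TT_def p_def .
    ultimately show "0 < tl_sum d k \<and> tl_sum d k < 1" using TT by linarith
  qed
qed

theorem theorem3:
  shows "PRCN \<subset> SPRCN"
proof (rule psubsetI)
  show "PRCN \<subseteq> SPRCN"
  proof
    fix x assume "x \<in> PRCN"
    then obtain I P where P: "prim_rec1 P" "\<forall>i. P i \<le> 1"
      "x = of_int I + (\<Sum>i. real (P (Suc i)) / 2 ^ Suc i)"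
      unfolding PRCN_def by blast
    have "PRe 1 (\<lambda>xs. Suc (P (var 0 xs)))" using PRe_of_prim_rec1[OF P(1)] by (rule PRe_Suc)
    then have Q: "prim_rec1 (\<lambda>i. Suc (P i))" by (rule prim_rec1_of_PRe)
    have "x = of_int I + (\<Sum>i. (real (Suc (P (Suc i))) - 1) / 2 ^ Suc i)" using P(3) by simp
    then show "x \<in> SPRCN" unfolding SPRCN_def using Q P(2)
      by (intro CollectI exI[of _ I] exI[of _ "\<lambda>i. Suc (P i)"]) auto
  qed
  have "(\<Sum>i. (real (D (Suc i)) - 1) / 2 ^ Suc i) \<in> SPRCN" unfolding SPRCN_def
    using prim_rec1_D D_le by (intro CollectI exI[of _ 0] exI[of _ D]) auto
  then show "PRCN \<noteq> SPRCN" using x0_notin by blast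
qed

end
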